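(* Consider the multi-round profit license game with horizon $T$, stage costs $C_1,\dots,C_T>0$ and menus $\mathcal{F}_1,\dots,\mathcal{F}_T$. (i) If $\mathcal{F}_t\subseteq\mathcal{E}$ for every $t=1,\dots,T$, then the multi-round contract is incentive-aligned: for every $\theta_0\in\Theta_0$ and every agent strategy, $\mathbb{E}_{\theta_0}[L+P-C]\le 0$. (ii) Conversely, if $\mathcal{F}_t\not\subseteq\mathcal{E}$ for some $t$, then there exist $\theta_0\in\Theta_0$ and an agent strategy with $\mathbb{E}_{\theta_0}[L+P-C]>0$, so the contract is not incentive-aligned.
   Context: Let $\Theta=\Theta_0\sqcup\Theta_1$ be a set of types (null and nonnull) and $(P_\theta)_{\theta\in\Theta}$ probability distributions on a measurable space $\mathcal{Z}$. An $e$-value is a measurable $g:\mathcal{Z}\to[0,\infty)$ with $\mathbb{E}_{Z\sim P_\theta}[g(Z)]\le 1$ for every $\theta\in\Theta_0$; $\mathcal{E}$ is the set of $e$-values. Multi-round profit license game for an agent of type $\theta$: fix $T\ge1$, costs $C_1,\dots,C_T>0$, and menus $\mathcal{F}_1,\dots,\mathcal{F}_T$ of measurable functions $\mathcal{Z}\to[0,\infty)$. Set $L(0)=0$. For $t=1,\dots,T$: the agent chooses a withdrawal $P(t)\in[0,L(t-1)]$ and an indicator $I_t\in\{0,1\}$. If $I_t=1$, the agent pays $C_t$, chooses $f_t\in\mathcal{F}_t$, a fresh observation $Z_t\sim P_\theta$ independent of everything before is drawn, and $L(t)=(L(t-1)+C_t-P(t))\,f_t(Z_t)$. If $I_t=0$,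 $L(t)=L(t-1)-P(t)$. An agent strategy specifies $P(t)$, $I_t$ and $f_t$ as (measurable) functions of the history $(P(s),I_s,f_s,Z_s)_{s<t}$. The totals are $L=L(T)$, $P=\sum_{t=1}^T P(t)$ and $C=\sum_{t=1}^T C_tI_t$; $\mathbb{E}_\theta$ denotes expectation when the agent has type $\theta$. The multi-round contract is incentive-aligned if $\mathbb{E}_{\theta_0}[L+P-C]\le 0$ for every $\theta_0\in\Theta_0$ and every agent strategy. *)

theory Defs
  imports "HOL-Probability.Probability"
begin

definition e_value :: "'z measure \<Rightarrow> ('th \<Rightarrow> 'z measure) \<Rightarrow> 'th set \<Rightarrow> ('z \<Rightarrow> real) \<Rightarrow> bool" where
  "e_value M P \<Theta>0 g \<longleftrightarrow> g \<in> borel_measurable M \<and> (\<forall>z\<in>space M. 0 \<le> g z)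
     \<and> (\<forall>\<theta>\<in>\<Theta>0. (\<integral>\<^sup>+ z. ennreal (g z) \<partial>(P \<theta>)) \<le> 1)"

definition e_values :: "'z measure \<Rightarrow> ('th \<Rightarrow> 'z measure) \<Rightarrow> 'th set \<Rightarrow> ('z \<Rightarrow> real) set" where
  "e_values M P \<Theta>0 = {g. e_value M P \<Theta>0 g}"

(* A (deterministic) agent strategy: at round t (t = 1..T), given the observable history
   of the previous rounds, it returns (withdrawal P(t), indicator I_t, chosen function f_t).
   Since the strategy is deterministic, the past withdrawals, indicators and chosen functions
   are themselves functions of the past observations; hence the history is encoded by the list
   of past observations, with None for rounds in which no observation was drawn (I_s = 0). *)
type_synonym 'z strategy = "nat \<Rightarrow> 'z option list \<Rightarrow> real \<times> bool \<times> ('z \<Rightarrow> real)"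

(* omega t is the fresh observation Z_t used in round t (only if I_t = 1) *)
fun hist :: "'z strategy \<Rightarrow> (nat \<Rightarrow> 'z) \<Rightarrow> nat \<Rightarrow> 'z option list" where
  "hist \<sigma> \<omega> 0 = []"
| "hist \<sigma> \<omega> (Suc n) =
     hist \<sigma> \<omega> n @ [if fst (snd (\<sigma> (Suc n) (hist \<sigma> \<omega> n))) then Some (\<omega> (Suc n)) else None]"

definition wdr :: "'z strategy \<Rightarrow> (nat \<Rightarrow> 'z) \<Rightarrow> nat \<Rightarrow> real" where
  "wdr \<sigma> \<omega> t = fst (\<sigma> t (hist \<sigma> \<omega> (t - 1)))"

definition ind :: "'z strategy \<Rightarrow> (nat \<Rightarrow> 'z) \<Rightarrow> nat \<Rightarrow> bool" where
  "ind \<sigma> \<omega> t = fst (snd (\<sigma> t (hist \<sigma> \<omega> (t - 1))))"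

definition fch :: "'z strategy \<Rightarrow> (nat \<Rightarrow> 'z) \<Rightarrow> nat \<Rightarrow> ('z \<Rightarrow> real)" where
  "fch \<sigma> \<omega> t = snd (snd (\<sigma> t (hist \<sigma> \<omega> (t - 1))))"

fun wealth :: "(nat \<Rightarrow> real) \<Rightarrow> 'z strategy \<Rightarrow> (nat \<Rightarrow> 'z) \<Rightarrow> nat \<Rightarrow> real" where
  "wealth C \<sigma> \<omega> 0 = 0"
| "wealth C \<sigma> \<omega> (Suc n) =
     (if ind \<sigma> \<omega> (Suc n)
      then (wealth C \<sigma> \<omega> n + C (Suc n) - wdr \<sigma> \<omega> (Suc n)) * fch \<sigma> \<omega> (Suc n) (\<omega> (Suc n))
      else wealth C \<sigma> \<omega> n - wdr \<sigma> \<omega> (Suc n))"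

definition payoff :: "(nat \<Rightarrow> real) \<Rightarrow> nat \<Rightarrow> 'z strategy \<Rightarrow> (nat \<Rightarrow> 'z) \<Rightarrow> real" where
  "payoff C T \<sigma> \<omega> = wealth C \<sigma> \<omega> T + (\<Sum>t=1..T. wdr \<sigma> \<omega> t)
      - (\<Sum>t=1..T. if ind \<sigma> \<omega> t then C t else 0)"

definition game_space :: "('th \<Rightarrow> 'z measure) \<Rightarrow> 'th \<Rightarrow> nat \<Rightarrow> (nat \<Rightarrow> 'z) measure" where
  "game_space P \<theta> T = PiM {1..T} (\<lambda>_. P \<theta>)"

definition admissible :: "'z measure \<Rightarrow> (nat \<Rightarrow> ('z \<Rightarrow> real) set) \<Rightarrow> (nat \<Rightarrow> real) \<Rightarrow> nat
    \<Rightarrow> 'z strategy \<Rightarrow> bool" where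
  "admissible M F C T \<sigma> \<longleftrightarrow> (\<forall>t\<in>{1..T}.
      (\<forall>\<omega>\<in>space (PiM {1..T} (\<lambda>_. M)).
          0 \<le> wdr \<sigma> \<omega> t \<and> wdr \<sigma> \<omega> t \<le> wealth C \<sigma> \<omega> (t - 1)
          \<and> (ind \<sigma> \<omega> t \<longrightarrow> fch \<sigma> \<omega> t \<in> F t))
    \<and> (\<lambda>\<omega>. wdr \<sigma> \<omega> t) \<in> borel_measurable (PiM {1..T} (\<lambda>_. M))
    \<and> (\<lambda>\<omega>. ind \<sigma> \<omega> t) \<in> measurable (PiM {1..T} (\<lambda>_. M)) (count_space UNIV)
    \<and> (\<lambda>\<omega>. fch \<sigma> \<omega> t (\<omega> t)) \<in> borel_measurable (PiM {1..T} (\<lambda>_. M)))"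

(* Extended-real expectation E[X] = E[X^+] - E[X^-] (well defined here since the
   payoff is bounded below by -(C_1+...+C_T)) *)
definition ext_expectation :: "'a measure \<Rightarrow> ('a \<Rightarrow> real) \<Rightarrow> ereal" where
  "ext_expectation N X = enn2ereal (\<integral>\<^sup>+ \<omega>. ennreal (X \<omega>) \<partial>N)
                        - enn2ereal (\<integral>\<^sup>+ \<omega>. ennreal (- X \<omega>) \<partial>N)"

definition incentive_aligned :: "'z measure \<Rightarrow> ('th \<Rightarrow> 'z measure) \<Rightarrow> 'th set
    \<Rightarrow> (nat \<Rightarrow> ('z \<Rightarrow> real) set) \<Rightarrow> (nat \<Rightarrow> real) \<Rightarrow> nat \<Rightarrow> bool" where
  "incentive_aligned M P \<Theta>0 F C T \<longleftrightarrow>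
     (\<forall>\<theta>0\<in>\<Theta>0. \<forall>\<sigma>. admissible M F C T \<sigma> \<longrightarrow>
        ext_expectation (game_space P \<theta>0 T) (payoff C T \<sigma>) \<le> 0)"

end

theory Submission
  imports Defs
begin

lemma ediff_le: "(a::ennreal) \<le> b \<Longrightarrow> b < \<top> \<Longrightarrow> enn2ereal a - enn2ereal b \<le> 0"
  by (simp add: ereal_minus_le less_eq_ennreal.rep_eq)
lemma ediff_gt: "(b::ennreal) < a \<Longrightarrow> b < \<top> \<Longrightarrow> enn2ereal a - enn2ereal b > 0"
  by (simp add: ereal_diff_gr0 less_ennreal.rep_eq)
lemma cancel: "(a::ennreal) + c \<le> c + b \<Longrightarrow> c < \<top> \<Longrightarrow> a \<le> b"
  by auto

lemma step_le:
  fixes Q :: "'z measure" and I :: "nat set"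
  assumes Q: "prob_space Q" and I: "finite I" "i \<in> I"
   and F[measurable]: "F \<in> borel_measurable (PiM I (\<lambda>_. Q))"
   and K[measurable]: "K \<in> borel_measurable (PiM I (\<lambda>_. Q))"
   and inner: "\<And>x. x \<in> space (PiM (I-{i}) (\<lambda>_. Q)) \<Longrightarrow> (\<integral>\<^sup>+ y. F (x(i:=y)) \<partial>Q) \<le> K x"
   and Kc: "\<And>x y. x \<in> space (PiM (I-{i}) (\<lambda>_. Q)) \<Longrightarrow> y \<in> space Q \<Longrightarrow> K (x(i:=y)) = K x"
  shows "(\<integral>\<^sup>+\<omega>. F \<omega> \<partial>PiM I (\<lambda>_. Q)) \<le> (\<integral>\<^sup>+\<omega>. K \<omega> \<partial>PiM I (\<lambda>_. Q))"
proof -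
  interpret Q: prob_space Q by fact
  interpret product_sigma_finite "\<lambda>_. Q" by (simp add: product_sigma_finite_def Q.sigma_finite_measure_axioms)
  have II: "I = insert i (I - {i})" using I by auto
  have "(\<integral>\<^sup>+\<omega>. F \<omega> \<partial>PiM I (\<lambda>_. Q)) = (\<integral>\<^sup>+ x. (\<integral>\<^sup>+ y. F (x(i := y)) \<partial>Q) \<partial>(PiM (I-{i}) (\<lambda>_. Q)))"
    using product_nn_integral_insert[of "I-{i}" i F] I F II by simp
  also have "\<dots> \<le> (\<integral>\<^sup>+ x. K x \<partial>(PiM (I-{i}) (\<lambda>_. Q)))"
    by (intro nn_integral_mono inner)
  also have "\<dots> = (\<integral>\<^sup>+ x. (\<integral>\<^sup>+ y. K (x(i := y)) \<partial>Q) \<partial>(PiM (I-{i}) (\<lambda>_. Q)))"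
  proof (intro nn_integral_cong)
    fix x assume x: "x \<in> space (PiM (I-{i}) (\<lambda>_. Q))"
    have "(\<integral>\<^sup>+ y. K (x(i := y)) \<partial>Q) = (\<integral>\<^sup>+ y. K x \<partial>Q)"
      by (intro nn_integral_cong) (simp add: Kc x)
    also have "\<dots> = K x" by (simp add: Q.emeasure_space_1)
    finally show "K x = (\<integral>\<^sup>+ y. K (x(i := y)) \<partial>Q)" by simp
  qed
  also have "\<dots> = (\<integral>\<^sup>+\<omega>. K \<omega> \<partial>PiM I (\<lambda>_. Q))"
    using product_nn_integral_insert[of "I-{i}" i K] I K II by simp
  finally show ?thesis .
qed

lemma hist_agree: "(\<And>s. s \<in> {1..n} \<Longrightarrow> \<omega> s = \<omega>' s) \<Longrightarrow> hist \<sigma> \<omega> n = hist \<sigma> \<omega>' n"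
  by (induction n) auto

lemma wealth_agree: "(\<And>s. s \<in> {1..n} \<Longrightarrow> \<omega> s = \<omega>' s) \<Longrightarrow> wealth C \<sigma> \<omega> n = wealth C \<sigma> \<omega>' n"
proof (induction n)
  case (Suc n)
  have h: "hist \<sigma> \<omega> n = hist \<sigma> \<omega>' n" by (rule hist_agree) (use Suc.prems in auto)
  have "wealth C \<sigma> \<omega> n = wealth C \<sigma> \<omega>' n" by (rule Suc.IH) (use Suc.prems in auto)
  then show ?case using h Suc.prems[of "Suc n"] by (simp add: wdr_def ind_def fch_def)
qed simp

lemma pm: "0 \<le> (A::real) \<Longrightarrow> 0 \<le> B \<Longrightarrow> ennreal (A - B) + ennreal B = ennreal A + ennreal (B - A)"
proof (cases "B \<le> A")
  case True
  assume "0 \<le> A" "0 \<le> B"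
  then show ?thesis using True ennreal_plus[of "A-B" B] by (simp add: ennreal_eq_0_iff)
next
  case False
  assume "0 \<le> A" "0 \<le> B"
  then show ?thesis using False ennreal_plus[of A "B-A"] by (simp add: ennreal_eq_0_iff)
qed

lemma part1:
  fixes M Q :: "'z measure" and F :: "nat \<Rightarrow> ('z \<Rightarrow> real) set" and C :: "nat \<Rightarrow> real"
    and \<sigma> :: "'z strategy"
  assumes Q: "prob_space Q" and sQ: "sets Q = sets M"
   and adm: "admissible M F C T \<sigma>"
   and ev: "\<And>t f. t\<in>{1..T} \<Longrightarrow> f \<in> F t \<Longrightarrow> f \<in> borel_measurable M \<and> (\<forall>z\<in>space M. 0 \<le> f z) \<and> (\<integral>\<^sup>+z. ennreal (f z) \<partial>Q) \<le> 1"
   and Cpos: "\<And>t. t\<in>{1..T} \<Longrightarrow> 0 < C t"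
  shows "ext_expectation (PiM {1..T} (\<lambda>_. Q)) (payoff C T \<sigma>) \<le> 0"
proof -
  interpret Q: prob_space Q by fact
  define N where "N = PiM {1..T} (\<lambda>_. Q)"
  have setsN: "sets N = sets (PiM {1..T} (\<lambda>_. M))" unfolding N_def by (rule sets_PiM_cong) (auto simp: sQ)
  have spN: "space N = space (PiM {1..T} (\<lambda>_. M))" using sets_eq_imp_space_eq[OF setsN] .
  have spQ: "space Q = space M" using sets_eq_imp_space_eq[OF sQ] .
  interpret N: prob_space N unfolding N_def by (intro prob_space_PiM Q)
  have mc: "\<And>X. measurable N X = measurable (PiM {1..T} (\<lambda>_. M)) X"
    by (rule measurable_cong_sets[OF setsN refl])
  note adm' = adm[unfolded admissible_def]
  have bnd: "\<And>t \<omega>. t\<in>{1..T} \<Longrightarrow> \<omega> \<in> space N \<Longrightarrow> 0 \<le> wdr \<sigma> \<omega> t \<and> wdr \<sigma> \<omega> t \<le> wealth C \<sigma> \<omega> (t-1) \<and> (ind \<sigma> \<omega> t \<longrightarrow> fch \<sigma> \<omega> t \<in> F t)"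
    using adm' spN by blast
  have mwdr: "\<And>t. t\<in>{1..T} \<Longrightarrow> (\<lambda>\<omega>. wdr \<sigma> \<omega> t) \<in> borel_measurable N"
    unfolding mc using adm' by blast
  have mind: "\<And>t. t\<in>{1..T} \<Longrightarrow> (\<lambda>\<omega>. ind \<sigma> \<omega> t) \<in> measurable N (count_space UNIV)"
    unfolding mc using adm' by blast
  have mfch: "\<And>t. t\<in>{1..T} \<Longrightarrow> (\<lambda>\<omega>. fch \<sigma> \<omega> t (\<omega> t)) \<in> borel_measurable N"
    unfolding mc using adm' by blast
  have comp: "\<And>\<omega> t. \<omega> \<in> space N \<Longrightarrow> t \<in> {1..T} \<Longrightarrow> \<omega> t \<in> space M"
    using spN by (auto simp: space_PiM PiE_def Pi_def)
  have mw: "(\<lambda>\<omega>. wealth C \<sigma> \<omega> n) \<in> borel_measurable N" if "n \<le> T" for n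
    using that
  proof (induction n)
    case 0 then show ?case by simp
  next
    case (Suc n)
    have t: "Suc n \<in> {1..T}" using Suc.prems by auto
    note [measurable] = Suc.IH[OF Suc_leD[OF Suc.prems]] mwdr[OF t] mfch[OF t]
    note [measurable] = mind[OF t]
    show ?case unfolding wealth.simps by measurable
  qed
  have mCt: "(\<lambda>\<omega>. if ind \<sigma> \<omega> t then C t else 0) \<in> borel_measurable N" if t: "t \<in> {1..T}" for t
  proof -
    note [measurable] = mind[OF t]
    show ?thesis by measurable
  qed
  have wnn: "0 \<le> wealth C \<sigma> \<omega> n" if "n \<le> T" "\<omega> \<in> space N" for n \<omega>
    using that
  proof (induction n)
    case 0 then show ?case by simp
  next
    case (Suc n)
    have t: "Suc n \<in> {1..T}" using Suc.prems by auto
    have W: "0 \<le> wealth C \<sigma> \<omega> n" using Suc by simp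
    note b = bnd[OF t Suc.prems(2)]
    have "ind \<sigma> \<omega> (Suc n) \<Longrightarrow> 0 \<le> fch \<sigma> \<omega> (Suc n) (\<omega> (Suc n))"
      using b ev[OF t] comp[OF Suc.prems(2) t] by blast
    then show ?case using b W Cpos[OF t] by auto
  qed
  define S where "S n \<omega> = wealth C \<sigma> \<omega> n + (\<Sum>t=1..n. wdr \<sigma> \<omega> t)" for n \<omega>
  define Cs where "Cs n \<omega> = (\<Sum>t=1..n. if ind \<sigma> \<omega> t then C t else 0)" for n \<omega>
  have mS: "(\<lambda>\<omega>. S n \<omega>) \<in> borel_measurable N" if "n \<le> T" for n
    unfolding S_def using that by (intro borel_measurable_add mw borel_measurable_sum mwdr) auto
  have mCs: "(\<lambda>\<omega>. Cs n \<omega>) \<in> borel_measurable N" if "n \<le> T" for n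
    unfolding Cs_def using that by (intro borel_measurable_sum mCt) auto
  have Snn: "0 \<le> S n \<omega>" if "n \<le> T" "\<omega> \<in> space N" for n \<omega>
    unfolding S_def using that wnn bnd by (intro add_nonneg_nonneg sum_nonneg) auto
  have Cnn: "0 \<le> Cs n \<omega>" if "n \<le> T" for n \<omega>
    unfolding Cs_def using that Cpos by (intro sum_nonneg) (auto simp: less_imp_le)
  have claim: "(\<integral>\<^sup>+\<omega>. ennreal (S n \<omega>) \<partial>N) \<le> (\<integral>\<^sup>+\<omega>. ennreal (Cs n \<omega>) \<partial>N)" if "n \<le> T" for n
    using that
  proof (induction n)
    case 0 then show ?case by (simp add: S_def Cs_def)
  next
    case (Suc n)
    have t: "(Suc n) \<in> {1..T}" using Suc.prems by (auto simp:)
    have IH: "(\<integral>\<^sup>+\<omega>. ennreal (S n \<omega>) \<partial>N) \<le> (\<integral>\<^sup>+\<omega>. ennreal (Cs n \<omega>) \<partial>N)"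
      using Suc by simp
    have eh: "hist \<sigma> (x((Suc n):=y)) m = hist \<sigma> x m" if "m \<le> n" for x y m
      by (rule hist_agree) (use that in \<open>auto simp:\<close>)
    have ewd: "wdr \<sigma> (x((Suc n):=y)) s = wdr \<sigma> x s" if "s \<le> Suc n" for x y s
      using eh[of "s - 1"] that by (simp add: wdr_def)
    have eind: "ind \<sigma> (x((Suc n):=y)) s = ind \<sigma> x s" if "s \<le> Suc n" for x y s
      using eh[of "s - 1"] that by (simp add: ind_def)
    have efch: "fch \<sigma> (x((Suc n):=y)) s = fch \<sigma> x s" if "s \<le> Suc n" for x y s
      using eh[of "s - 1"] that by (simp add: fch_def)
    have ewl: "wealth C \<sigma> (x((Suc n):=y)) n = wealth C \<sigma> x n" for x y
      by (rule wealth_agree) (auto simp:)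
    have esum: "(\<Sum>t=1..n. wdr \<sigma> (x((Suc n):=y)) t) = (\<Sum>t=1..n. wdr \<sigma> x t)" for x y
      by (rule sum.cong[OF refl], rule ewd) auto
    have eSn: "S n (x((Suc n):=y)) = S n x" for x y
      unfolding S_def ewl esum ..
    define K where "K \<omega> = ennreal (S n \<omega> + (if ind \<sigma> \<omega> (Suc n) then C (Suc n) else 0))" for \<omega>
    have st: "(\<integral>\<^sup>+\<omega>. ennreal (S (Suc n) \<omega>) \<partial>N) \<le> (\<integral>\<^sup>+\<omega>. K \<omega> \<partial>N)"
      unfolding N_def
    proof (rule step_le[OF Q])
      show "finite {1..T}" by simp
      show "(Suc n) \<in> {1..T}" using t .
      show "(\<lambda>\<omega>. ennreal (S (Suc n) \<omega>)) \<in> borel_measurable (PiM {1..T} (\<lambda>_. Q))"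
        using mS[OF Suc.prems] unfolding N_def by (rule measurable_compose[OF _ measurable_ennreal])
      have "(\<lambda>\<omega>. S n \<omega> + (if ind \<sigma> \<omega> (Suc n) then C (Suc n) else 0)) \<in> borel_measurable N"
        using mS[of n] mCt[OF t] Suc.prems by (intro borel_measurable_add) auto
      then show "K \<in> borel_measurable (PiM {1..T} (\<lambda>_. Q))"
        unfolding N_def K_def by (rule measurable_compose[OF _ measurable_ennreal])
      show "K (x((Suc n):=y)) = K x" for x y
      proof -
        have "ind \<sigma> (x((Suc n):=y)) (Suc n) = ind \<sigma> x (Suc n)" by (rule eind) simp
        then show ?thesis unfolding K_def eSn by simp
      qed
    next
      fix x assume x: "x \<in> space (PiM ({1..T}-{(Suc n)}) (\<lambda>_. Q))"
      obtain y0 where y0: "y0 \<in> space Q" using Q.not_empty by blast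
      have memb: "x((Suc n):=y) \<in> space N" if "y \<in> space Q" for y
        using x t that by (auto simp: N_def space_PiM PiE_iff extensional_def)
      define p where "p = wdr \<sigma> x (Suc n)"
      define W where "W = wealth C \<sigma> x n"
      define f where "f = fch \<sigma> x (Suc n)"
      define r where "r = (\<Sum>t=1..n. wdr \<sigma> x t)"
      note b = bnd[OF t memb[OF y0]]
      have p0: "0 \<le> p" and pW: "p \<le> W" and fF: "ind \<sigma> x (Suc n) \<Longrightarrow> f \<in> F (Suc n)"
        using b by (simp_all add: p_def W_def f_def ewd eind efch ewl)
      have r0: "0 \<le> r" unfolding r_def
      proof (intro sum_nonneg)
        fix s assume s: "s \<in> {1..n}"
        then have "s \<in> {1..T}" using Suc.prems by auto
        from bnd[OF this memb[OF y0]] s show "0 \<le> wdr \<sigma> x s" by (simp add: ewd)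
      qed
      have eS: "S (Suc n) (x((Suc n):=y)) = (if ind \<sigma> x (Suc n) then (W + C (Suc n) - p) * f y else W - p) + (r + p)" for y
      proof -
        have rr: "(\<Sum>t=Suc 0..n. wdr \<sigma> x t) = r" by (simp add: r_def)
        show ?thesis unfolding S_def using esum[of x y]
          by (simp add: ewd eind efch ewl p_def W_def f_def rr)
      qed
      have SnK: "K x = ennreal (W + r + (if ind \<sigma> x (Suc n) then C (Suc n) else 0))"
        by (simp add: K_def S_def W_def r_def)
      show "(\<integral>\<^sup>+ y. ennreal (S (Suc n) (x((Suc n):=y))) \<partial>Q) \<le> K x"
      proof (cases "ind \<sigma> x (Suc n)")
        case True
        have fm: "f \<in> borel_measurable Q" and fnn: "\<And>z. z \<in> space Q \<Longrightarrow> 0 \<le> f z"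
          and fi: "(\<integral>\<^sup>+z. ennreal (f z) \<partial>Q) \<le> 1"
          using ev[OF t fF[OF True]] measurable_cong_sets[OF sQ refl] spQ by auto
        have c0: "0 \<le> W + C (Suc n) - p" using pW Cpos[OF t] by simp
        have "(\<integral>\<^sup>+ y. ennreal (S (Suc n) (x((Suc n):=y))) \<partial>Q)
            = (\<integral>\<^sup>+ y. ennreal (W + C (Suc n) - p) * ennreal (f y) + ennreal (r + p) \<partial>Q)"
          using True c0 fnn r0 p0 by (intro nn_integral_cong) (simp add: eS ennreal_mult)
        also have "\<dots> = ennreal (W + C (Suc n) - p) * (\<integral>\<^sup>+ y. ennreal (f y) \<partial>Q) + ennreal (r + p)"
          using fm by (subst nn_integral_add) (auto simp add: nn_integral_cmult Q.emeasure_space_1)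
        also have "\<dots> \<le> ennreal (W + C (Suc n) - p) * 1 + ennreal (r + p)"
          by (intro add_mono mult_left_mono fi) auto
        also have "\<dots> = ennreal (W + r + C (Suc n))"
          using ennreal_plus[OF c0, of "r + p"] r0 p0 by (simp add: algebra_simps)
        finally show ?thesis using True SnK by simp
      next
        case False
        have "(\<integral>\<^sup>+ y. ennreal (S (Suc n) (x((Suc n):=y))) \<partial>Q) = (\<integral>\<^sup>+ y. ennreal (W + r) \<partial>Q)"
          using False by (intro nn_integral_cong) (simp add: eS)
        also have "\<dots> = ennreal (W + r)" by (simp add: Q.emeasure_space_1)
        finally show ?thesis using False SnK by simp
      qed
    qed
    also have "\<dots> = (\<integral>\<^sup>+\<omega>. ennreal (S n \<omega>) \<partial>N) + (\<integral>\<^sup>+\<omega>. ennreal (if ind \<sigma> \<omega> (Suc n) then C (Suc n) else 0) \<partial>N)"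
    proof -
      have "(\<integral>\<^sup>+\<omega>. K \<omega> \<partial>N) = (\<integral>\<^sup>+\<omega>. ennreal (S n \<omega>) + ennreal (if ind \<sigma> \<omega> (Suc n) then C (Suc n) else 0) \<partial>N)"
        unfolding K_def using Snn[of n] Suc.prems Cpos[OF t]
        by (intro nn_integral_cong) (simp add: less_imp_le)
      also have "\<dots> = (\<integral>\<^sup>+\<omega>. ennreal (S n \<omega>) \<partial>N) + (\<integral>\<^sup>+\<omega>. ennreal (if ind \<sigma> \<omega> (Suc n) then C (Suc n) else 0) \<partial>N)"
        using mS[of n] mCt[OF t] Suc.prems
        by (intro nn_integral_add measurable_compose[OF _ measurable_ennreal]) auto
      finally show ?thesis .
    qed
    also have "\<dots> \<le> (\<integral>\<^sup>+\<omega>. ennreal (Cs n \<omega>) \<partial>N) + (\<integral>\<^sup>+\<omega>. ennreal (if ind \<sigma> \<omega> (Suc n) then C (Suc n) else 0) \<partial>N)"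
      using IH by (rule add_right_mono)
    also have "\<dots> = (\<integral>\<^sup>+\<omega>. ennreal (Cs n \<omega>) + ennreal (if ind \<sigma> \<omega> (Suc n) then C (Suc n) else 0) \<partial>N)"
      using mCs[of n] mCt[OF t] Suc.prems
      by (intro nn_integral_add[symmetric] measurable_compose[OF _ measurable_ennreal]) auto
    also have "\<dots> = (\<integral>\<^sup>+\<omega>. ennreal (Cs (Suc n) \<omega>) \<partial>N)"
      using Cnn[of n] Suc.prems Cpos[OF t]
      by (intro nn_integral_cong) (simp add: Cs_def less_imp_le)
    finally show ?case .
  qed
  have A: "(\<integral>\<^sup>+\<omega>. ennreal (S T \<omega>) \<partial>N) \<le> (\<integral>\<^sup>+\<omega>. ennreal (Cs T \<omega>) \<partial>N)"
    using claim by simp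
  have pay: "payoff C T \<sigma> = (\<lambda>\<omega>. S T \<omega> - Cs T \<omega>)"
    by (rule ext) (simp add: payoff_def S_def Cs_def)
  have fin: "(\<integral>\<^sup>+\<omega>. ennreal (Cs T \<omega>) \<partial>N) < \<top>"
  proof -
    have "(\<integral>\<^sup>+\<omega>. ennreal (Cs T \<omega>) \<partial>N) \<le> (\<integral>\<^sup>+\<omega>. ennreal (\<Sum>t=1..T. C t) \<partial>N)"
      unfolding Cs_def using Cpos
      by (intro nn_integral_mono ennreal_leI sum_mono) (auto simp: less_imp_le)
    also have "\<dots> = ennreal (\<Sum>t=1..T. C t)" by (simp add: N.emeasure_space_1)
    finally show ?thesis using le_less_trans by fastforce
  qed
  define a where "a = (\<integral>\<^sup>+\<omega>. ennreal (S T \<omega> - Cs T \<omega>) \<partial>N)"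
  define b where "b = (\<integral>\<^sup>+\<omega>. ennreal (Cs T \<omega> - S T \<omega>) \<partial>N)"
  have mST: "(\<lambda>\<omega>. S T \<omega>) \<in> borel_measurable N" and mCT: "(\<lambda>\<omega>. Cs T \<omega>) \<in> borel_measurable N"
    using mS mCs by auto
  have "a + (\<integral>\<^sup>+\<omega>. ennreal (Cs T \<omega>) \<partial>N) = (\<integral>\<^sup>+\<omega>. ennreal (S T \<omega> - Cs T \<omega>) + ennreal (Cs T \<omega>) \<partial>N)"
    unfolding a_def using mST mCT
    by (intro nn_integral_add[symmetric] measurable_compose[OF _ measurable_ennreal]) auto
  also have "\<dots> = (\<integral>\<^sup>+\<omega>. ennreal (S T \<omega>) + ennreal (Cs T \<omega> - S T \<omega>) \<partial>N)"
    using Snn Cnn by (intro nn_integral_cong pm) auto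
  also have "\<dots> = (\<integral>\<^sup>+\<omega>. ennreal (S T \<omega>) \<partial>N) + b"
    unfolding b_def using mST mCT
    by (intro nn_integral_add measurable_compose[OF _ measurable_ennreal]) auto
  also have "\<dots> \<le> (\<integral>\<^sup>+\<omega>. ennreal (Cs T \<omega>) \<partial>N) + b"
    using A by (rule add_right_mono)
  finally have "a \<le> b" by (rule cancel[OF _ fin])
  moreover have "b < \<top>"
  proof -
    have "b \<le> (\<integral>\<^sup>+\<omega>. ennreal (Cs T \<omega>) \<partial>N)"
      unfolding b_def using Snn by (intro nn_integral_mono ennreal_leI) auto
    then show ?thesis using fin le_less_trans by blast
  qed
  ultimately have "enn2ereal a - enn2ereal b \<le> 0" by (rule ediff_le)
  then show ?thesis
    unfolding ext_expectation_def pay N_def[symmetric] a_def b_def by simp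
qed

lemma comp_integral:
  fixes Q :: "'z measure"
  assumes Q: "prob_space Q" and t: "t \<in> {1..T}" and h: "h \<in> borel_measurable Q"
  shows "(\<integral>\<^sup>+\<omega>. h (\<omega> t) \<partial>PiM {1..T} (\<lambda>_. Q)) = (\<integral>\<^sup>+z. h z \<partial>Q)"
proof -
  have d: "distr (PiM {1..T} (\<lambda>_. Q)) Q (\<lambda>\<omega>. \<omega> t) = Q"
    using distr_PiM_component[of "{1..T}" "\<lambda>_. Q" t] Q t by simp
  have m: "(\<lambda>\<omega>. \<omega> t) \<in> measurable (PiM {1..T} (\<lambda>_. Q)) Q"
    using t by (rule measurable_component_singleton)
  have "(\<integral>\<^sup>+z. h z \<partial>Q) = (\<integral>\<^sup>+z. h z \<partial>distr (PiM {1..T} (\<lambda>_. Q)) Q (\<lambda>\<omega>. \<omega> t))"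
    by (simp add: d)
  also have "\<dots> = (\<integral>\<^sup>+\<omega>. h (\<omega> t) \<partial>PiM {1..T} (\<lambda>_. Q))"
    using h by (intro nn_integral_distr[OF m]) (simp add: d)
  finally show ?thesis by simp
qed

lemma part2:
  fixes M Q :: "'z measure" and F :: "nat \<Rightarrow> ('z \<Rightarrow> real) set" and C :: "nat \<Rightarrow> real"
  assumes Q: "prob_space Q" and sQ: "sets Q = sets M"
   and t: "t \<in> {1..T}" and fF: "f \<in> F t" and fm: "f \<in> borel_measurable M"
   and fnn: "\<And>z. z \<in> space M \<Longrightarrow> 0 \<le> f z"
   and fi: "1 < (\<integral>\<^sup>+z. ennreal (f z) \<partial>Q)"
   and Cpos: "0 < C t"
  shows "\<exists>\<sigma>. admissible M F C T \<sigma> \<and> ext_expectation (PiM {1..T} (\<lambda>_. Q)) (payoff C T \<sigma>) > 0"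
proof -
  interpret Q: prob_space Q by fact
  have spQ: "space Q = space M" using sets_eq_imp_space_eq[OF sQ] .
  have fmQ: "f \<in> borel_measurable Q" unfolding measurable_cong_sets[OF sQ refl] by (rule fm)
  define \<sigma> :: "'z strategy" where "\<sigma> = (\<lambda>s h. (0, s = t, f))"
  have w0: "wdr \<sigma> \<omega> s = 0" for \<omega> s by (simp add: wdr_def \<sigma>_def)
  have i0: "ind \<sigma> \<omega> s = (s = t)" for \<omega> s by (simp add: ind_def \<sigma>_def)
  have f0: "fch \<sigma> \<omega> s = f" for \<omega> s by (simp add: fch_def \<sigma>_def)
  have wl: "wealth C \<sigma> \<omega> n = (if t \<le> n then C t * f (\<omega> t) else 0)" for \<omega> n
    using t by (induction n) (auto simp: w0 i0 f0 le_Suc_eq)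
  have adm: "admissible M F C T \<sigma>"
    unfolding admissible_def
  proof (intro ballI conjI)
    fix s \<omega> assume s: "s \<in> {1..T}" and \<omega>: "\<omega> \<in> space (PiM {1..T} (\<lambda>_. M))"
    have "\<omega> t \<in> space M" using \<omega> t by (auto simp: space_PiM PiE_def Pi_def)
    then have "0 \<le> f (\<omega> t)" by (rule fnn)
    then show "0 \<le> wdr \<sigma> \<omega> s" "wdr \<sigma> \<omega> s \<le> wealth C \<sigma> \<omega> (s - 1)"
      using Cpos by (auto simp: w0 wl)
    show "ind \<sigma> \<omega> s \<longrightarrow> fch \<sigma> \<omega> s \<in> F s" using fF by (simp add: i0 f0)
  next
    fix s assume s: "s \<in> {1..T}"
    show "(\<lambda>\<omega>. wdr \<sigma> \<omega> s) \<in> borel_measurable (PiM {1..T} (\<lambda>_. M))" by (simp add: w0)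
    show "(\<lambda>\<omega>. ind \<sigma> \<omega> s) \<in> measurable (PiM {1..T} (\<lambda>_. M)) (count_space UNIV)" by (simp add: i0)
    show "(\<lambda>\<omega>. fch \<sigma> \<omega> s (\<omega> s)) \<in> borel_measurable (PiM {1..T} (\<lambda>_. M))"
      unfolding f0 using measurable_component_singleton[OF s] fm by (rule measurable_compose)
  qed
  define c where "c = C t"
  have pay: "payoff C T \<sigma> = (\<lambda>\<omega>. c * f (\<omega> t) - c)"
  proof
    fix \<omega>
    have "(\<Sum>s=1..T. if ind \<sigma> \<omega> s then C s else 0) = (\<Sum>s\<in>{1..T}. if s = t then C s else 0)"
      by (simp add: i0)
    also have "\<dots> = C t" using t by (simp add: sum.delta')
    finally show "payoff C T \<sigma> \<omega> = c * f (\<omega> t) - c"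
      using t by (simp add: payoff_def w0 wl c_def)
  qed
  define a where "a = (\<integral>\<^sup>+z. ennreal (c * f z - c) \<partial>Q)"
  define b where "b = (\<integral>\<^sup>+z. ennreal (c - c * f z) \<partial>Q)"
  have ea: "(\<integral>\<^sup>+\<omega>. ennreal (c * f (\<omega> t) - c) \<partial>PiM {1..T} (\<lambda>_. Q)) = a"
    unfolding a_def using fmQ by (intro comp_integral[OF Q t, of "\<lambda>z. ennreal (c * f z - c)"]) auto
  have eb: "(\<integral>\<^sup>+\<omega>. ennreal (- (c * f (\<omega> t) - c)) \<partial>PiM {1..T} (\<lambda>_. Q)) = b"
  proof -
    have "(\<integral>\<^sup>+\<omega>. ennreal (- (c * f (\<omega> t) - c)) \<partial>PiM {1..T} (\<lambda>_. Q)) = (\<integral>\<^sup>+\<omega>. ennreal (c - c * f (\<omega> t)) \<partial>PiM {1..T} (\<lambda>_. Q))"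
      by simp
    also have "\<dots> = b" unfolding b_def using fmQ by (intro comp_integral[OF Q t]) auto
    finally show ?thesis .
  qed
  have c0: "0 < c" using Cpos by (simp add: c_def)
  have "a + ennreal c = (\<integral>\<^sup>+z. ennreal (c * f z - c) + ennreal c \<partial>Q)"
    unfolding a_def using fmQ by (subst nn_integral_add) (auto simp: Q.emeasure_space_1)
  also have "\<dots> = (\<integral>\<^sup>+z. ennreal (c * f z) + ennreal (c - c * f z) \<partial>Q)"
    using c0 fnn spQ by (intro nn_integral_cong pm) auto
  also have "\<dots> = (\<integral>\<^sup>+z. ennreal (c * f z) \<partial>Q) + b"
    unfolding b_def using fmQ by (subst nn_integral_add) auto
  also have "(\<integral>\<^sup>+z. ennreal (c * f z) \<partial>Q) = ennreal c * (\<integral>\<^sup>+z. ennreal (f z) \<partial>Q)"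
  proof -
    have "(\<integral>\<^sup>+z. ennreal (c * f z) \<partial>Q) = (\<integral>\<^sup>+z. ennreal c * ennreal (f z) \<partial>Q)"
      using c0 by (simp add: ennreal_mult')
    also have "\<dots> = ennreal c * (\<integral>\<^sup>+z. ennreal (f z) \<partial>Q)"
      using fmQ by (intro nn_integral_cmult) simp
    finally show ?thesis .
  qed
  finally have eq: "a + ennreal c = ennreal c * (\<integral>\<^sup>+z. ennreal (f z) \<partial>Q) + b" .
  have gt: "ennreal c < ennreal c * (\<integral>\<^sup>+z. ennreal (f z) \<partial>Q)"
    using ennreal_mult_strict_left_mono[OF fi, of "ennreal c"] c0 by simp
  have bfin: "b \<le> ennreal c"
  proof -
    have "b \<le> (\<integral>\<^sup>+z. ennreal c \<partial>Q)"
      unfolding b_def using c0 fnn spQ by (intro nn_integral_mono ennreal_leI) auto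
    then show ?thesis by (simp add: Q.emeasure_space_1)
  qed
  then have btop: "b < \<top>" using le_less_trans by fastforce
  have "b < a"
  proof (rule ccontr)
    assume "\<not> b < a"
    then have "a \<le> b" by simp
    then have "ennreal c * (\<integral>\<^sup>+z. ennreal (f z) \<partial>Q) + b \<le> b + ennreal c"
      unfolding eq[symmetric] by (simp add: add.commute add_right_mono)
    then have "ennreal c * (\<integral>\<^sup>+z. ennreal (f z) \<partial>Q) \<le> ennreal c" by (rule cancel[OF _ btop])
    then show False using gt by simp
  qed
  then have "enn2ereal a - enn2ereal b > 0" using btop by (rule ediff_gt)
  then have "ext_expectation (PiM {1..T} (\<lambda>_. Q)) (payoff C T \<sigma>) > 0"
    unfolding ext_expectation_def pay ea eb .
  then show ?thesis using adm by blast
qed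

theorem propositionB1:
  fixes M :: "'z measure" and P :: "'th \<Rightarrow> 'z measure" and \<Theta>0 \<Theta>1 :: "'th set"
    and T :: nat and C :: "nat \<Rightarrow> real" and F :: "nat \<Rightarrow> ('z \<Rightarrow> real) set"
  assumes disj: "\<Theta>0 \<inter> \<Theta>1 = {}"
    and prob: "\<And>\<theta>. \<theta> \<in> \<Theta>0 \<union> \<Theta>1 \<Longrightarrow> prob_space (P \<theta>) \<and> sets (P \<theta>) = sets M"
    and T_pos: "1 \<le> T"
    and C_pos: "\<And>t. t \<in> {1..T} \<Longrightarrow> 0 < C t"
    and menus: "\<And>t f. t \<in> {1..T} \<Longrightarrow> f \<in> F t \<Longrightarrow>
                   f \<in> borel_measurable M \<and> (\<forall>z\<in>space M. 0 \<le> f z)"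
  shows "((\<forall>t\<in>{1..T}. F t \<subseteq> e_values M P \<Theta>0) \<longrightarrow> incentive_aligned M P \<Theta>0 F C T)
       \<and> ((\<exists>t\<in>{1..T}. \<not> F t \<subseteq> e_values M P \<Theta>0) \<longrightarrow>
            (\<exists>\<theta>0\<in>\<Theta>0. \<exists>\<sigma>. admissible M F C T \<sigma> \<and>
                ext_expectation (game_space P \<theta>0 T) (payoff C T \<sigma>) > 0))"
proof (intro conjI impI)
  assume E: "\<forall>t\<in>{1..T}. F t \<subseteq> e_values M P \<Theta>0"
  show "incentive_aligned M P \<Theta>0 F C T"
    unfolding incentive_aligned_def
  proof (intro ballI allI impI)
    fix \<theta>0 \<sigma> assume th: "\<theta>0 \<in> \<Theta>0" and adm: "admissible M F C T \<sigma>"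
    have pr: "prob_space (P \<theta>0)" "sets (P \<theta>0) = sets M" using prob th by auto
    show "ext_expectation (game_space P \<theta>0 T) (payoff C T \<sigma>) \<le> 0"
      unfolding game_space_def
    proof (rule part1[OF pr adm _ C_pos])
      fix t f assume t: "t \<in> {1..T}" and f: "f \<in> F t"
      then have "e_value M P \<Theta>0 f" using E by (auto simp: e_values_def)
      then show "f \<in> borel_measurable M \<and> (\<forall>z\<in>space M. 0 \<le> f z) \<and> (\<integral>\<^sup>+z. ennreal (f z) \<partial>P \<theta>0) \<le> 1"
        using th by (auto simp: e_value_def)
    qed auto
  qed
next
  assume "\<exists>t\<in>{1..T}. \<not> F t \<subseteq> e_values M P \<Theta>0"
  then obtain t where t: "t \<in> {1..T}" and nt: "\<not> F t \<subseteq> e_values M P \<Theta>0" by blast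
  then obtain f where fF: "f \<in> F t" and nf: "f \<notin> e_values M P \<Theta>0" by blast
  then have ne: "\<not> e_value M P \<Theta>0 f" by (simp add: e_values_def)
  have fm: "f \<in> borel_measurable M" and fnn: "\<forall>z\<in>space M. 0 \<le> f z" using menus[OF t fF] by auto
  then obtain \<theta> where th: "\<theta> \<in> \<Theta>0" and gt: "\<not> (\<integral>\<^sup>+ z. ennreal (f z) \<partial>(P \<theta>)) \<le> 1"
    using ne by (auto simp: e_value_def)
  have pr: "prob_space (P \<theta>)" "sets (P \<theta>) = sets M" using prob th by auto
  obtain \<sigma> where "admissible M F C T \<sigma>" "ext_expectation (PiM {1..T} (\<lambda>_. P \<theta>)) (payoff C T \<sigma>) > 0"
  proof -
    have fnn': "\<And>z. z \<in> space M \<Longrightarrow> 0 \<le> f z" using fnn by blast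
    have gt': "1 < (\<integral>\<^sup>+ z. ennreal (f z) \<partial>(P \<theta>))" using gt by (simp add: not_le)
    show ?thesis using part2[where Q="P \<theta>" and M=M and t=t and T=T and f=f and F=F and C=C, OF pr t fF fm fnn' gt' C_pos[OF t]] that by blast
  qed
  then show "\<exists>\<theta>0\<in>\<Theta>0. \<exists>\<sigma>. admissible M F C T \<sigma> \<and> ext_expectation (game_space P \<theta>0 T) (payoff C T \<sigma>) > 0"
    using th unfolding game_space_def by blast
qed

end
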